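(* Let $X$ be a real Banach space, $K\subset X$ compact, $\lambda_1,\dots,\lambda_m\in X^*$ with $\|\lambda_j\|_{X^*}=1$, $f\in K$, $w:=\lambda(f)$, and assume $R(K_w)_X\neq0$. Define on $X$ the loss $$\mathcal{L}_K(g):=\|\lambda(g)-w\|+\operatorname{dist}(g,K)_X .$$ Let $C>2$ and let $\delta>0$ satisfy $$2\delta+2R(K(w,4\delta))_X\le C\,R(K_w)_X$$ (which holds for all sufficiently small $\delta>0$). Let $\Sigma\subset X$ satisfy $\operatorname{dist}(K,\Sigma)_X<\delta$ and let $\hat f\in\mathop{\rm argmin}_{g\in\Sigma}\mathcal{L}_K(g)$ be any minimizer. Then $\|f-\hat f\|_X\le C\,R(K_w)_X$.
   Context: For $g\in X$, $\lambda(g):=(\lambda_1(g),\dots,\lambda_m(g))$; on $\mathbb{R}^m$, $\|v\|:=\big[\frac1m\sum_{j=1}^m|v_j|^2\big]^{1/2}$. $\operatorname{dist}(g,K)_X:=\inf_{h\in K}\|g-h\|_X$; for $A,B\subset X$, $\operatorname{dist}(A,B)_X:=\sup_{a\in A}\inf_{b\in B}\|a-b\|_X$. $K_w:=\{h\in K:\lambda(h)=w\}$, $K(w,\varepsilon):=\bigcup_{w'\in\mathbb{R}^m,\ \|w'-w\|\le\varepsilon}K_{w'}$. For $S\subset X$, $R(S)_X:=\inf\{r:\ S\subset B(z,r)_X\text{ for some }z\in X\}$ (Chebyshev radius). *)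

theory Defs
  imports "HOL-Analysis.Analysis"
begin

text \<open>Vectors in R^m are represented as functions nat => real, only indices j < m matter.\<close>

definition mnorm :: "nat \<Rightarrow> (nat \<Rightarrow> real) \<Rightarrow> real" where
  "mnorm m v = sqrt ((1 / real m) * (\<Sum>j<m. \<bar>v j\<bar>^2))"

definition meas :: "(nat \<Rightarrow> ('a::real_normed_vector \<Rightarrow>\<^sub>L real)) \<Rightarrow> 'a \<Rightarrow> (nat \<Rightarrow> real)" where
  "meas lam g = (\<lambda>j. blinfun_apply (lam j) g)"

definition fiber :: "nat \<Rightarrow> (nat \<Rightarrow> ('a::real_normed_vector \<Rightarrow>\<^sub>L real)) \<Rightarrow> 'a set \<Rightarrow> (nat \<Rightarrow> real) \<Rightarrow> 'a set" where
  "fiber m lam K w = {h \<in> K. \<forall>j<m. meas lam h j = w j}"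

definition fiber_nbhd :: "nat \<Rightarrow> (nat \<Rightarrow> ('a::real_normed_vector \<Rightarrow>\<^sub>L real)) \<Rightarrow> 'a set \<Rightarrow> (nat \<Rightarrow> real) \<Rightarrow> real \<Rightarrow> 'a set" where
  "fiber_nbhd m lam K w eps = (\<Union>w'\<in>{w'. mnorm m (\<lambda>j. w' j - w j) \<le> eps}. fiber m lam K w')"

definition cheb_radius :: "'a::real_normed_vector set \<Rightarrow> real" where
  "cheb_radius S = Inf {r. \<exists>z. S \<subseteq> cball z r}"

definition set_dist_dir :: "'a::real_normed_vector set \<Rightarrow> 'a set \<Rightarrow> real" where
  "set_dist_dir A B = (SUP a\<in>A. infdist a B)"

definition lossK :: "nat \<Rightarrow> (nat \<Rightarrow> ('a::real_normed_vector \<Rightarrow>\<^sub>L real)) \<Rightarrow> 'a set \<Rightarrow> (nat \<Rightarrow> real) \<Rightarrow> 'a \<Rightarrow> real" where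
  "lossK m lam K w g = mnorm m (\<lambda>j. meas lam g j - w j) + infdist g K"

end

theory Submission
  imports Defs
begin

lemma infdist_lessE:
  assumes "A \<noteq> {}" "infdist x A < d"
  shows "\<exists>y\<in>A. dist x y < d"
proof -
  have "(INF a\<in>A. dist x a) < d" using assms infdist_notempty by metis
  moreover have "bdd_below ((\<lambda>a. dist x a) ` A)" by (rule bdd_belowI[of _ 0]) auto
  ultimately show ?thesis using cINF_less_iff[where f="dist x" and A=A and a=d] assms(1) by blast
qed

lemma mnorm_L2: "mnorm m v = sqrt (1 / real m) * L2_set v {..<m}"
  unfolding mnorm_def L2_set_def real_sqrt_mult[symmetric] by simp

lemma mnorm_add: "mnorm m (\<lambda>j. a j + b j) \<le> mnorm m a + mnorm m b"
proof -
  have "sqrt (1 / real m) * L2_set (\<lambda>j. a j + b j) {..<m}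
     \<le> sqrt (1 / real m) * (L2_set a {..<m} + L2_set b {..<m})"
    by (rule mult_left_mono[OF L2_set_triangle_ineq]) simp
  then show ?thesis unfolding mnorm_L2 by (simp add: algebra_simps)
qed

lemma mnorm_meas:
  assumes "\<forall>j<m. norm (lam j) = 1"
  shows "mnorm m (\<lambda>j. meas lam x j) \<le> norm x"
proof (cases "m = 0")
  case True then show ?thesis by (simp add: mnorm_def)
next
  case False
  have b: "\<bar>meas lam x j\<bar>^2 \<le> (norm x)^2" if "j < m" for j
  proof -
    have "\<bar>meas lam x j\<bar> \<le> norm x"
      using norm_blinfun[of "lam j" x] assms that by (simp add: meas_def)
    then have "\<bar>meas lam x j\<bar>^2 \<le> (norm x)^2" by (rule power_mono) simp
    then show ?thesis by simp
  qed
  have "(\<Sum>j<m. \<bar>meas lam x j\<bar>^2) \<le> (\<Sum>j<m. (norm x)^2)"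
    by (rule sum_mono) (use b in auto)
  then have "(\<Sum>j<m. \<bar>meas lam x j\<bar>^2) \<le> real m * (norm x)^2" by simp
  then have "(1 / real m) * (\<Sum>j<m. \<bar>meas lam x j\<bar>^2) \<le> (norm x)^2"
    using False by (simp add: field_simps)
  then have "mnorm m (\<lambda>j. meas lam x j) \<le> sqrt ((norm x)^2)"
    unfolding mnorm_def by (rule real_sqrt_le_mono)
  then show ?thesis by simp
qed

lemma cheb_diam:
  assumes "bounded S" "a \<in> S" "b \<in> S"
  shows "norm (a - b) \<le> 2 * cheb_radius S"
proof -
  obtain z r where zr: "S \<subseteq> cball z r" using assms(1) bounded_subset_cball by blast
  have ne: "{r. \<exists>z. S \<subseteq> cball z r} \<noteq> {}" using zr by blast
  have "norm (a - b) / 2 \<le> cheb_radius S" unfolding cheb_radius_def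
  proof (rule cInf_greatest[OF ne])
    fix r assume "r \<in> {r. \<exists>z. S \<subseteq> cball z r}"
    then obtain z where "S \<subseteq> cball z r" by blast
    then have "dist z a \<le> r" "dist z b \<le> r" using assms by auto
    moreover have "norm (a - b) \<le> dist z a + dist z b"
      by (metis dist_commute dist_norm dist_triangle)
    ultimately show "norm (a - b) / 2 \<le> r" by simp
  qed
  then show ?thesis by simp
qed

theorem theorem3p4:
  fixes K \<Sigma> :: "'a::banach set"
    and lam :: "nat \<Rightarrow> ('a \<Rightarrow>\<^sub>L real)"
    and m :: nat and f fhat :: 'a and w :: "nat \<Rightarrow> real"
    and C \<delta> :: real
  assumes "compact K"
    and "\<forall>j<m. norm (lam j) = 1"
    and "f \<in> K"
    and "w = meas lam f"
    and "cheb_radius (fiber m lam K w) \<noteq> 0"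
    and "C > 2"
    and "\<delta> > 0"
    and "2 * \<delta> + 2 * cheb_radius (fiber_nbhd m lam K w (4 * \<delta>)) \<le> C * cheb_radius (fiber m lam K w)"
    and "set_dist_dir K \<Sigma> < \<delta>"
    and "fhat \<in> \<Sigma>"
    and "\<forall>g\<in>\<Sigma>. lossK m lam K w fhat \<le> lossK m lam K w g"
  shows "norm (f - fhat) \<le> C * cheb_radius (fiber m lam K w)"
proof -
  note lam = assms(2)
  have measdiff: "meas lam x j - meas lam y j = meas lam (x - y) j" for x y j
    by (simp add: meas_def blinfun.diff_right)
  have bK: "bounded K" using assms(1) compact_imp_bounded by blast
  have bdd: "bdd_above ((\<lambda>a. infdist a \<Sigma>) ` K)"
  proof -
    obtain B where B: "\<forall>x\<in>K. norm x \<le> B" using bK bounded_iff by blast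
    show ?thesis
    proof (rule bdd_aboveI[of _ "B + norm fhat"])
      fix y assume "y \<in> (\<lambda>a. infdist a \<Sigma>) ` K"
      then obtain a where a: "a \<in> K" "y = infdist a \<Sigma>" by blast
      have "infdist a \<Sigma> \<le> dist a fhat" using infdist_le assms(10) by blast
      also have "\<dots> \<le> norm a + norm fhat" by (simp add: dist_norm norm_triangle_ineq4)
      finally show "y \<le> B + norm fhat" using a B by auto
    qed
  qed
  have "infdist f \<Sigma> \<le> set_dist_dir K \<Sigma>"
    unfolding set_dist_dir_def using cSUP_upper[OF assms(3) bdd] .
  then have "infdist f \<Sigma> < \<delta>" using assms(9) by simp
  then obtain g where g: "g \<in> \<Sigma>" "dist f g < \<delta>"
    using infdist_lessE assms(10) by blast
  have "lossK m lam K w g \<le> norm (g - f) + norm (f - g)"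
  proof -
    have "mnorm m (\<lambda>j. meas lam g j - w j) = mnorm m (\<lambda>j. meas lam (g - f) j)"
      using assms(4) measdiff by simp
    also have "\<dots> \<le> norm (g - f)" by (rule mnorm_meas[OF lam])
    finally have 1: "mnorm m (\<lambda>j. meas lam g j - w j) \<le> norm (g - f)" .
    have "infdist g K \<le> dist g f" using infdist_le assms(3) by blast
    then show ?thesis using 1 unfolding lossK_def by (simp add: dist_norm norm_minus_commute)
  qed
  then have "lossK m lam K w g < 2 * \<delta>" using g(2) by (simp add: dist_norm norm_minus_commute)
  then have L: "lossK m lam K w fhat < 2 * \<delta>" using assms(11) g(1) by fastforce
  define e where "e = mnorm m (\<lambda>j. meas lam fhat j - w j)"
  have "infdist fhat K < 2 * \<delta> - e" using L unfolding lossK_def e_def by simp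
  then obtain h where h: "h \<in> K" "dist fhat h < 2 * \<delta> - e"
    using infdist_lessE assms(3) by blast
  have "mnorm m (\<lambda>j. meas lam h j - w j)
        = mnorm m (\<lambda>j. meas lam (h - fhat) j + (meas lam fhat j - w j))"
    by (intro arg_cong[where f="mnorm m"] ext) (simp add: measdiff[symmetric])
  also have "\<dots> \<le> mnorm m (\<lambda>j. meas lam (h - fhat) j) + e"
    unfolding e_def by (rule mnorm_add)
  also have "\<dots> \<le> norm (h - fhat) + e" using mnorm_meas[OF lam] by simp
  finally have "mnorm m (\<lambda>j. meas lam h j - w j) < 2 * \<delta>"
    using h(2) by (simp add: dist_norm norm_minus_commute)
  then have hin: "h \<in> fiber_nbhd m lam K w (4 * \<delta>)"
    unfolding fiber_nbhd_def fiber_def using h(1) assms(7) by force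
  have fin: "f \<in> fiber_nbhd m lam K w (4 * \<delta>)"
    unfolding fiber_nbhd_def fiber_def
  proof (rule UN_I[of w])
    show "w \<in> {w'. mnorm m (\<lambda>j. w' j - w j) \<le> 4 * \<delta>}" using assms(7) by (simp add: mnorm_def)
    show "f \<in> {h \<in> K. \<forall>j<m. meas lam h j = w j}" using assms(3,4) by simp
  qed
  have sub: "fiber_nbhd m lam K w (4 * \<delta>) \<subseteq> K"
    unfolding fiber_nbhd_def fiber_def by auto
  have "norm (f - h) \<le> 2 * cheb_radius (fiber_nbhd m lam K w (4 * \<delta>))"
    by (rule cheb_diam[OF bounded_subset[OF bK sub] fin hin])
  moreover have "norm (f - fhat) \<le> norm (f - h) + norm (h - fhat)"
    using norm_triangle_ineq[of "f - h" "h - fhat"] by simp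
  moreover have "norm (h - fhat) < 2 * \<delta>" using h(2) e_def
  proof -
    have "e \<ge> 0" unfolding e_def mnorm_def by (simp add: sum_nonneg)
    then show ?thesis using h(2) by (simp add: dist_norm norm_minus_commute)
  qed
  ultimately show ?thesis using assms(8) by linarith
qed

end
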